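(* Let $\sigma$ and $\phi$ be two permutations of $\{1,\dots,n\}$, let $S\subseteq\{1,\dots,n\}$, and let $\theta$ be defined by $\theta(a)=\sigma(a)$ if $a\in S$ and $\theta(a)=\phi(a)$ if $a\notin S$. Then $\theta$ is a permutation if and only if $S$ is stable by $\phi^{-1}\sigma$. Moreover, in that case $\theta_{|S}=\phi_{|S}(\phi^{-1}\sigma)_{|S}$.
   Context: Permutations compose right to left ($(\phi^{-1}\sigma)(a)=\phi^{-1}(\sigma(a))$). For a permutation $\pi$ of a set $H$ and $S\subseteq H$, the restriction $\pi_{|S}$ is the permutation of $S$ whose cycles are obtained from those of $\pi$ by erasing the elements not in $S$; equivalently $\pi_{|S}(s)=\pi^k(s)$ where $k\ge1$ is least with $\pi^k(s)\in S$. *)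

theory Defs
  imports "HOL-Combinatorics.Permutations"
begin

text \<open>Restriction of a permutation pi to a set S: erase from the cycles of pi the
elements not in S, i.e. for s in S, the result is pi^k s with k >= 1 least such that
pi^k s is in S; elements outside S are fixed.\<close>
definition perm_restrict :: "('a \<Rightarrow> 'a) \<Rightarrow> 'a set \<Rightarrow> 'a \<Rightarrow> 'a" where
  "perm_restrict \<pi> S = (\<lambda>s. if s \<in> S then (\<pi> ^^ (LEAST k. 0 < k \<and> (\<pi> ^^ k) s \<in> S)) s else s)"

end

theory Submission
  imports Defs
begin

theorem mainTheorem6:
  fixes \<sigma> \<phi> :: "nat \<Rightarrow> nat" and n :: nat and S :: "nat set"
  assumes "\<sigma> permutes {1..n}" and "\<phi> permutes {1..n}" and "S \<subseteq> {1..n}"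
  defines "\<theta> \<equiv> (\<lambda>a. if a \<in> S then \<sigma> a else \<phi> a)"
  shows "(\<theta> permutes {1..n} \<longleftrightarrow> (inv \<phi> \<circ> \<sigma>) ` S \<subseteq> S)
    \<and> (\<theta> permutes {1..n} \<longrightarrow>
         perm_restrict \<theta> S = perm_restrict \<phi> S \<circ> perm_restrict (inv \<phi> \<circ> \<sigma>) S)"
proof -
  note s = assms(1) and p = assms(2) and SS = assms(3)
  define \<psi> where "\<psi> = inv \<phi> \<circ> \<sigma>"
  have pinv: "inv \<phi> permutes {1..n}" using p by (rule permutes_inv)
  have psi: "\<psi> permutes {1..n}" unfolding \<psi>_def using permutes_compose[OF s pinv] .
  have phipsi: "\<phi> (\<psi> a) = \<sigma> a" for a unfolding \<psi>_def using permutes_inverses(1)[OF p] by simp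
  have psiphi: "\<psi> a = b \<longleftrightarrow> \<sigma> a = \<phi> b" for a b
    by (metis phipsi p permutes_inverses(2) \<psi>_def comp_apply)
  have injs: "inj \<sigma>" using s by (rule permutes_inj)
  have injp: "inj \<phi>" using p by (rule permutes_inj)
  have part1: "\<theta> permutes {1..n} \<longleftrightarrow> \<psi> ` S \<subseteq> S"
  proof
    assume th: "\<theta> permutes {1..n}"
    show "\<psi> ` S \<subseteq> S"
    proof (rule ccontr)
      assume "\<not> \<psi> ` S \<subseteq> S"
      then obtain x where x: "x \<in> S" "\<psi> x \<notin> S" by auto
      define b where "b = \<psi> x"
      have "\<theta> b = \<theta> x" using x phipsi unfolding \<theta>_def b_def by simp
      moreover have "b \<noteq> x" using x b_def by auto
      ultimately show False using permutes_inj[OF th] by (meson injD)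
    qed
  next
    assume st: "\<psi> ` S \<subseteq> S"
    have out: "\<forall>x. x \<notin> {1..n} \<longrightarrow> \<theta> x = x"
      using SS permutes_not_in[OF p] unfolding \<theta>_def by auto
    have img: "\<theta> ` {1..n} \<subseteq> {1..n}"
      using SS permutes_in_image[OF s] permutes_in_image[OF p] unfolding \<theta>_def by auto
    have inj: "inj_on \<theta> {1..n}"
    proof (rule inj_onI)
      fix a b assume ab: "a \<in> {1..n}" "b \<in> {1..n}" "\<theta> a = \<theta> b"
      show "a = b"
      proof (cases "a \<in> S"; cases "b \<in> S")
        assume "a \<in> S" "b \<in> S" then show ?thesis using ab injs unfolding \<theta>_def by (simp add: inj_eq)
      next
        assume "a \<notin> S" "b \<notin> S" then show ?thesis using ab injp unfolding \<theta>_def by (simp add: inj_eq)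
      next
        assume h: "a \<in> S" "b \<notin> S"
        then have "\<sigma> a = \<phi> b" using ab unfolding \<theta>_def by simp
        then have "\<psi> a = b" using psiphi by simp
        then show ?thesis using h st by auto
      next
        assume h: "a \<notin> S" "b \<in> S"
        then have "\<sigma> b = \<phi> a" using ab unfolding \<theta>_def by simp
        then have "\<psi> b = a" using psiphi by simp
        then show ?thesis using h st by auto
      qed
    qed
    have "\<theta> ` {1..n} = {1..n}" using endo_inj_surj[OF _ img inj] by simp
    then have "bij_betw \<theta> {1..n} {1..n}" using inj by (simp add: bij_betw_def)
    then show "\<theta> permutes {1..n}" using out bij_imp_permutes by blast
  qed
  have part2: "perm_restrict \<theta> S = perm_restrict \<phi> S \<circ> perm_restrict \<psi> S"
    if st: "\<psi> ` S \<subseteq> S"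
  proof
    fix x
    show "perm_restrict \<theta> S x = (perm_restrict \<phi> S \<circ> perm_restrict \<psi> S) x"
    proof (cases "x \<in> S")
      case False
      then show ?thesis unfolding perm_restrict_def by simp
    next
      case xS: True
      define t where "t = \<psi> x"
      have tS: "t \<in> S" using st xS t_def by auto
      have l1: "(LEAST k. 0 < k \<and> (\<psi> ^^ k) x \<in> S) = 1"
        by (rule Least_equality) (use tS t_def in auto)
      have rpsi: "perm_restrict \<psi> S x = t" unfolding perm_restrict_def using xS l1 t_def by simp
      have "permutation \<phi>" using p permutation_permutes by blast
      then obtain m0 where m0: "m0 > 0" "(\<phi> ^^ m0) t = t" by (rule permutation_self)
      define m where "m = (LEAST k. 0 < k \<and> (\<phi> ^^ k) t \<in> S)"
      have Pm: "0 < m \<and> (\<phi> ^^ m) t \<in> S" unfolding m_def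
        by (rule LeastI[of _ m0]) (use m0 tS in auto)
      have minm: "(\<phi> ^^ k) t \<notin> S" if "0 < k" "k < m" for k
        using not_less_Least[of k "\<lambda>k. 0 < k \<and> (\<phi> ^^ k) t \<in> S"] that unfolding m_def by blast
      have eq: "(\<theta> ^^ k) x = (\<phi> ^^ k) t" if "0 < k" "k \<le> m" for k
        using that
      proof (induction k)
        case 0 then show ?case by simp
      next
        case (Suc k)
        show ?case
        proof (cases k)
          case 0 then show ?thesis using xS phipsi t_def unfolding \<theta>_def by simp
        next
          case (Suc j)
          then have ih: "(\<theta> ^^ k) x = (\<phi> ^^ k) t" using Suc.IH Suc.prems by simp
          have "(\<phi> ^^ k) t \<notin> S" using minm[of k] Suc Suc.prems by linarith
          then show ?thesis using ih unfolding \<theta>_def by simp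
        qed
      qed
      have lth: "(LEAST k. 0 < k \<and> (\<theta> ^^ k) x \<in> S) = m"
      proof (rule Least_equality)
        show "0 < m \<and> (\<theta> ^^ m) x \<in> S" using Pm eq[of m] by simp
      next
        fix y assume "0 < y \<and> (\<theta> ^^ y) x \<in> S"
        then show "m \<le> y" using eq[of y] minm[of y] by (metis not_le order_less_imp_le)
      qed
      have "perm_restrict \<theta> S x = (\<theta> ^^ m) x" unfolding perm_restrict_def using xS lth by simp
      also have "\<dots> = (\<phi> ^^ m) t" using eq[of m] Pm by simp
      also have "\<dots> = perm_restrict \<phi> S t" unfolding perm_restrict_def m_def using tS by simp
      finally show ?thesis using rpsi by simp
    qed
  qed
  show ?thesis using part1 part2 unfolding \<psi>_def by blast
qed

end
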